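(* Let $A,B\in\mathcal{S}_n$ and $x\in\mathbb{R}^n$. There exists a maximal lower bound $C$ of $A$ and $B$ in the Löwner order such that $Ax=Cx$ if and only if $x^TAx<x^TBx$ or $Ax=Bx$.
   Context: $\mathcal{S}_n$ is the set of real symmetric $n\times n$ matrices. Löwner order: $X\preceq Y$ iff $y^TXy\le y^TYy$ for all $y$. A maximal lower bound of $A,B$ is a $C\in\mathcal{S}_n$ with $C\preceq A$, $C\preceq B$ such that no $C'\ne C$ with $C\preceq C'$ satisfies $C'\preceq A$, $C'\preceq B$. *)

theory Defs
  imports "HOL-Analysis.Analysis"
begin

definition symmetric_matrix :: "real^'n^'n \<Rightarrow> bool" where
  "symmetric_matrix M \<longleftrightarrow> transpose M = M"

definition loewner_le :: "real^'n^'n \<Rightarrow> real^'n^'n \<Rightarrow> bool" where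
  "loewner_le X Y \<longleftrightarrow> (\<forall>y. y \<bullet> (X *v y) \<le> y \<bullet> (Y *v y))"

definition maximal_lower_bound :: "real^'n^'n \<Rightarrow> real^'n^'n \<Rightarrow> real^'n^'n \<Rightarrow> bool" where
  "maximal_lower_bound A B C \<longleftrightarrow>
     symmetric_matrix C \<and> loewner_le C A \<and> loewner_le C B \<and>
     (\<forall>C'. symmetric_matrix C' \<and> loewner_le C C' \<and> loewner_le C' A \<and> loewner_le C' B
           \<longrightarrow> C' = C)"

end

theory Submission
  imports Defs
begin

lemma sym_inner:
  fixes D :: "real^'n^'n"
  assumes "symmetric_matrix D"
  shows "(D *v u) \<bullet> v = u \<bullet> (D *v v)"
proof -
  have "u v* D = D *v u" using assms unfolding symmetric_matrix_def
    by (metis vector_transpose_matrix)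
  then show ?thesis by (metis dot_lmul_matrix)
qed

lemma transpose_diff': "transpose (A - B) = transpose A - transpose (B::real^'n^'n)"
  by (simp add: transpose_def vec_eq_iff)

lemma sym_diff: "symmetric_matrix A \<Longrightarrow> symmetric_matrix B \<Longrightarrow> symmetric_matrix (A - B)"
  by (simp add: symmetric_matrix_def transpose_diff')

lemma loewner_diff: "loewner_le C C' \<longleftrightarrow> (\<forall>y. 0 \<le> y \<bullet> ((C' - C) *v y))"
  by (simp add: loewner_le_def matrix_vector_mult_diff_rdistrib inner_diff_right)

lemma psd_kernel:
  fixes D :: "real^'n^'n"
  assumes s: "symmetric_matrix D" and p: "\<And>y. 0 \<le> y \<bullet> (D *v y)" and z: "x \<bullet> (D *v x) = 0"
  shows "D *v x = 0"
proof -
  define z where "z = D *v x"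
  define p where "p = z \<bullet> z"
  define q where "q = z \<bullet> (D *v z)"
  have q0: "q \<ge> 0" using p q_def by auto
  have xz: "x \<bullet> (D *v z) = p" using sym_inner[OF s, of x z] p_def z_def by (simp add: inner_commute)
  have key: "0 \<le> 2 * t * p + t^2 * q" for t
  proof -
    have "0 \<le> (x + t *\<^sub>R z) \<bullet> (D *v (x + t *\<^sub>R z))" by (rule p)
    also have "\<dots> = x \<bullet> (D *v x) + t * (x \<bullet> (D *v z)) + t * (z \<bullet> (D *v x)) + t^2 * q"
      by (simp add: matrix_vector_right_distrib matrix_vector_mult_scaleR inner_add_left inner_add_right q_def power2_eq_square algebra_simps)
    finally show ?thesis using z xz by (simp add: z_def p_def)
  qed
  have "p = 0"
  proof (cases "q = 0")
    case True
    have "p \<ge> 0" unfolding p_def by simp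
    then show ?thesis using key[of "-1"] True by simp
  next
    case False
    then have qp: "q > 0" using q0 by simp
    have "0 \<le> 2 * (-p/q) * p + (-p/q)^2 * q" by (rule key)
    also have "\<dots> = - (p^2 / q)" using qp by (simp add: field_simps power2_eq_square)
    finally have "p^2 / q \<le> 0" by simp
    then have "p^2 \<le> 0" using qp by (simp add: divide_le_0_iff)
    then show ?thesis by simp
  qed
  then show ?thesis by (simp add: p_def z_def)
qed

lemma key_ineq:
  fixes N :: "real^'n^'n" and x :: "real^'n"
  assumes s: "symmetric_matrix N" and h: "x \<bullet> (N *v x) > 0 \<or> N *v x = 0"
  shows "\<exists>lam\<ge>0. \<forall>y. 0 \<le> y \<bullet> (N *v y) + lam * (y \<bullet> y - (x \<bullet> y)^2 / (x \<bullet> x))"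
proof -
  have "bounded_linear (\<lambda>v. N *v v)"
    using matrix_vector_mul_linear linear_conv_bounded_linear by blast
  then obtain K where K: "K > 0" "\<And>v. norm (N *v v) \<le> norm v * K"
    using bounded_linear.pos_bounded by blast
  define c where "c = x \<bullet> (N *v x)"
  define L where "L = norm (N *v x)"
  define lam where "lam = K + (if c > 0 then L^2 / c else 0)"
  have lam0: "lam \<ge> 0" using K by (simp add: lam_def)
  have "0 \<le> y \<bullet> (N *v y) + lam * (y \<bullet> y - (x \<bullet> y)^2 / (x \<bullet> x))" for y
  proof -
    define \<alpha> where "\<alpha> = (x \<bullet> y) / (x \<bullet> x)"
    define z where "z = y - \<alpha> *\<^sub>R x"
    have y: "y = \<alpha> *\<^sub>R x + z" by (simp add: z_def)
    have w: "y \<bullet> y - (x \<bullet> y)^2 / (x \<bullet> x) = z \<bullet> z"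
    proof (cases "x = 0")
      case True then show ?thesis by (simp add: z_def \<alpha>_def)
    next
      case False
      then have xx: "x \<bullet> x > 0" by simp
      show ?thesis unfolding z_def \<alpha>_def using xx
        by (simp add: inner_diff_left inner_diff_right inner_commute field_simps power2_eq_square)
    qed
    have xNz: "x \<bullet> (N *v z) = z \<bullet> (N *v x)"
      using sym_inner[OF s, of x z] by (simp add: inner_commute)
    have q: "y \<bullet> (N *v y) = \<alpha>^2 * c + 2 * \<alpha> * (z \<bullet> (N *v x)) + z \<bullet> (N *v z)"
      unfolding y c_def using xNz
      by (simp add: matrix_vector_right_distrib matrix_vector_mult_scaleR inner_add_left inner_add_right power2_eq_square algebra_simps)
    have b1: "\<bar>z \<bullet> (N *v z)\<bar> \<le> norm z * norm z * K"
      using Cauchy_Schwarz_ineq2[of z "N *v z"] K(2)[of z]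
      by (metis (no_types, opaque_lifting) mult.assoc mult_left_mono norm_ge_zero order_trans)
    have b2: "\<bar>z \<bullet> (N *v x)\<bar> \<le> norm z * L"
      using Cauchy_Schwarz_ineq2[of z "N *v x"] by (simp add: L_def)
    have zz: "z \<bullet> z = norm z * norm z" by (metis power2_norm_eq_inner power2_eq_square)
    have b3: "2 * \<alpha> * (z \<bullet> (N *v x)) \<ge> - (2 * \<bar>\<alpha>\<bar> * (norm z * L))"
    proof -
      have "\<bar>2 * \<alpha> * (z \<bullet> (N *v x))\<bar> \<le> 2 * \<bar>\<alpha>\<bar> * (norm z * L)"
        using b2 by (simp add: abs_mult mult_left_mono)
      then show ?thesis by linarith
    qed
    have main: "0 \<le> \<alpha>^2 * c - 2 * \<bar>\<alpha>\<bar> * (norm z * L) + (if c > 0 then L^2 / c else 0) * (norm z * norm z)"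
    proof (cases "c > 0")
      case True
      have "c * (\<alpha>^2 * c - 2 * \<bar>\<alpha>\<bar> * (norm z * L) + (L^2 / c) * (norm z * norm z))
            = (\<bar>\<alpha>\<bar> * c - norm z * L)^2"
        using True by (simp add: field_simps power2_eq_square)
      then have "0 \<le> c * (\<alpha>^2 * c - 2 * \<bar>\<alpha>\<bar> * (norm z * L) + (L^2 / c) * (norm z * norm z))"
        by simp
      then show ?thesis using True by (simp add: zero_le_mult_iff)
    next
      case False
      then have "N *v x = 0" using h c_def by simp
      then have "L = 0" "c = 0" by (simp_all add: L_def c_def)
      then show ?thesis by simp
    qed
    show ?thesis unfolding w q lam_def zz using b1 b3 main
      by (simp add: algebra_simps) linarith?
  qed
  then show ?thesis using lam0 by blast
qed

lemma exists_C0: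
  fixes A B :: "real^'n^'n" and x :: "real^'n"
  assumes sA: "symmetric_matrix A" and sB: "symmetric_matrix B"
    and h: "x \<bullet> (A *v x) < x \<bullet> (B *v x) \<or> A *v x = B *v x"
  shows "\<exists>C0. symmetric_matrix C0 \<and> loewner_le C0 A \<and> loewner_le C0 B \<and> C0 *v x = A *v x"
proof -
  define N where "N = B - A"
  have sN: "symmetric_matrix N" using sA sB sym_diff by (simp add: N_def)
  have "x \<bullet> (N *v x) > 0 \<or> N *v x = 0" using h
    by (auto simp: N_def matrix_vector_mult_diff_rdistrib inner_diff_right)
  then obtain lam where lam: "lam \<ge> 0"
    "\<And>y. 0 \<le> y \<bullet> (N *v y) + lam * (y \<bullet> y - (x \<bullet> y)^2 / (x \<bullet> x))"
    using key_ineq[OF sN] by blast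
  define Q where "Q = ((\<chi> i j. x$i * x$j) :: real^'n^'n)"
  define P where "P = mat 1 - (1 / (x \<bullet> x)) *\<^sub>R Q"
  define C0 where "C0 = A - lam *\<^sub>R P"
  have Qv: "Q *v y = (x \<bullet> y) *\<^sub>R x" for y
    by (simp add: Q_def matrix_vector_mult_def inner_vec_def vec_eq_iff sum_distrib_left sum_distrib_right mult_ac)
  have Pv: "P *v y = y - ((x \<bullet> y) / (x \<bullet> x)) *\<^sub>R x" for y
    by (simp add: P_def matrix_vector_mult_diff_rdistrib scaleR_matrix_vector_assoc[symmetric] Qv)
  have Cq: "y \<bullet> (C0 *v y) = y \<bullet> (A *v y) - lam * (y \<bullet> y - (x \<bullet> y)^2 / (x \<bullet> x))" for y
    by (simp add: C0_def matrix_vector_mult_diff_rdistrib scaleR_matrix_vector_assoc[symmetric] Pv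
        inner_diff_right power2_eq_square inner_commute)
  have tO: "transpose Q = Q" by (simp add: Q_def transpose_def vec_eq_iff mult.commute)
  have sC0: "symmetric_matrix C0"
    using sA by (simp add: symmetric_matrix_def C0_def P_def transpose_diff' transpose_scalar tO)
  have cs: "(x \<bullet> y)^2 / (x \<bullet> x) \<le> y \<bullet> y" for y
  proof (cases "x = 0")
    case True then show ?thesis by simp
  next
    case False
    then have xx: "x \<bullet> x > 0" by simp
    have "(x \<bullet> y)^2 \<le> (x \<bullet> x) * (y \<bullet> y)"
      using Cauchy_Schwarz_ineq[of x y] by simp
    then show ?thesis using xx by (simp add: divide_le_eq mult.commute)
  qed
  have l1: "loewner_le C0 A" unfolding loewner_le_def Cq
    using lam(1) cs by (simp add: mult_nonneg_nonneg)
  have l2: "loewner_le C0 B" unfolding loewner_le_def Cq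
  proof
    fix y
    have "y \<bullet> (N *v y) = y \<bullet> (B *v y) - y \<bullet> (A *v y)"
      by (simp add: N_def matrix_vector_mult_diff_rdistrib inner_diff_right)
    then show "y \<bullet> (A *v y) - lam * (y \<bullet> y - (x \<bullet> y)^2 / (x \<bullet> x)) \<le> y \<bullet> (B *v y)"
      using lam(2)[of y] by linarith
  qed
  have e: "C0 *v x = A *v x"
  proof (cases "x = 0")
    case True then show ?thesis by simp
  next
    case False
    then have "P *v x = 0" by (simp add: Pv)
    then show ?thesis by (simp add: C0_def matrix_vector_mult_diff_rdistrib scaleR_matrix_vector_assoc[symmetric])
  qed
  show ?thesis using sC0 l1 l2 e by blast
qed

lemma linear_mv: "linear (\<lambda>C::real^'n^'n. C *v y)"
  by (rule linearI) (simp_all add: matrix_vector_mult_add_rdistrib scaleR_matrix_vector_assoc)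

lemma cont_mv: "continuous_on UNIV (\<lambda>C::real^'n^'n. C *v y)"
  using linear_mv linear_conv_bounded_linear linear_continuous_on by blast

lemma cont_qf: "continuous_on UNIV (\<lambda>C::real^'n^'n. y \<bullet> (C *v y))"
  by (intro continuous_on_inner continuous_on_const cont_mv)

lemma cont_transpose: "continuous_on UNIV (transpose :: real^'n^'n \<Rightarrow> real^'n^'n)"
proof -
  have "linear (transpose :: real^'n^'n \<Rightarrow> real^'n^'n)"
    by (rule linearI) (simp_all add: transpose_def vec_eq_iff)
  then show ?thesis using linear_conv_bounded_linear linear_continuous_on by blast
qed

lemma entry: "(C::real^'n^'n) $ i $ j = axis i 1 \<bullet> (C *v axis j 1)"
  by (simp add: inner_axis' matrix_vector_mul_component inner_axis)

lemma polar_bound: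
  fixes D M :: "real^'n^'n"
  assumes s: "symmetric_matrix D" and p: "\<And>y. 0 \<le> y \<bullet> (D *v y)"
    and m: "\<And>y. y \<bullet> (D *v y) \<le> y \<bullet> (M *v y)"
  shows "\<bar>u \<bullet> (D *v v)\<bar> \<le> (u \<bullet> (M *v u) + v \<bullet> (M *v v)) / 2"
proof -
  have vu: "v \<bullet> (D *v u) = u \<bullet> (D *v v)"
    using sym_inner[OF s, of v u] by (simp add: inner_commute)
  have e1: "(u + v) \<bullet> (D *v (u + v)) = u \<bullet> (D *v u) + 2 * (u \<bullet> (D *v v)) + v \<bullet> (D *v v)"
    using vu by (simp add: matrix_vector_right_distrib inner_add_left inner_add_right)
  have e2: "(u - v) \<bullet> (D *v (u - v)) = u \<bullet> (D *v u) - 2 * (u \<bullet> (D *v v)) + v \<bullet> (D *v v)"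
    using vu by (simp add: matrix_vector_mult_diff_distrib inner_diff_left inner_diff_right)
  show ?thesis
  proof (intro abs_leI)
    have ar: "(b::real) \<le> (d+e)/2" if "0 \<le> f" "a \<le> d" "c \<le> e" "f = a - 2*b + c" for a b c d e f::real
      using that by argo
    show "u \<bullet> (D *v v) \<le> (u \<bullet> (M *v u) + v \<bullet> (M *v v)) / 2"
      by (rule ar[OF p[of "u-v"] m[of u] m[of v] e2])
    have ar2: "-(b::real) \<le> (d+e)/2" if "0 \<le> f" "a \<le> d" "c \<le> e" "f = a + 2*b + c" for a b c d e f::real
      using that by argo
    show "- (u \<bullet> (D *v v)) \<le> (u \<bullet> (M *v u) + v \<bullet> (M *v v)) / 2"
      by (rule ar2[OF p[of "u+v"] m[of u] m[of v] e1])
  qed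
qed

definition tr :: "real^'n^'n \<Rightarrow> real" where
  "tr C = (\<Sum>i\<in>UNIV. axis i 1 \<bullet> (C *v axis i 1))"

lemma cont_tr: "continuous_on S tr"
  unfolding tr_def
  by (intro continuous_on_sum continuous_on_subset[OF cont_qf] subset_UNIV)

lemma psd_zero:
  fixes D :: "real^'n^'n"
  assumes s: "symmetric_matrix D" and p: "\<And>y. 0 \<le> y \<bullet> (D *v y)" and t: "tr D \<le> 0"
  shows "D = 0"
proof -
  have nn: "\<forall>i\<in>UNIV. 0 \<le> axis i 1 \<bullet> (D *v axis i 1)" using p by blast
  then have "tr D \<ge> 0" unfolding tr_def by (intro sum_nonneg) blast
  then have "tr D = 0" using t by linarith
  then have "\<forall>i\<in>UNIV. axis i 1 \<bullet> (D *v axis i 1) = 0"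
    using sum_nonneg_eq_0_iff[of UNIV "\<lambda>i. axis i 1 \<bullet> (D *v axis i 1)"] nn unfolding tr_def by simp
  then have k: "D *v axis i 1 = 0" for i using psd_kernel[OF s p] by blast
  have "D *v z = 0" for z
  proof -
    have "(D *v z) $ i = 0" for i
      using sym_inner[OF s, of "axis i 1" z] k[of i] by (simp add: cart_eq_inner_axis inner_commute)
    then show ?thesis by (simp add: vec_eq_iff)
  qed
  then show ?thesis by (simp add: matrix_eq)
qed

lemma loewner_trans: "loewner_le X Y \<Longrightarrow> loewner_le Y Z \<Longrightarrow> loewner_le X Z"
  unfolding loewner_le_def by (meson order_trans)

lemma loewner_refl: "loewner_le X X"
  unfolding loewner_le_def by simp

theorem proposition4p5:
  fixes A B :: "real^'n^'n" and x :: "real^'n"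
  assumes "symmetric_matrix A" and "symmetric_matrix B"
  shows "(\<exists>C. maximal_lower_bound A B C \<and> A *v x = C *v x) \<longleftrightarrow>
         (x \<bullet> (A *v x) < x \<bullet> (B *v x) \<or> A *v x = B *v x)"
proof
  assume "\<exists>C. maximal_lower_bound A B C \<and> A *v x = C *v x"
  then obtain C where mC: "maximal_lower_bound A B C" and e: "A *v x = C *v x" by blast
  then have sC: "symmetric_matrix C" and CB: "loewner_le C B"
    unfolding maximal_lower_bound_def by auto
  have le: "x \<bullet> (C *v x) \<le> x \<bullet> (B *v x)" using CB unfolding loewner_le_def by blast
  show "x \<bullet> (A *v x) < x \<bullet> (B *v x) \<or> A *v x = B *v x"
  proof (cases "x \<bullet> (A *v x) < x \<bullet> (B *v x)")
    case True then show ?thesis by blast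
  next
    case False
    then have eq: "x \<bullet> (C *v x) = x \<bullet> (B *v x)" using le e by simp
    have sD: "symmetric_matrix (B - C)" using sym_diff[OF assms(2) sC] .
    have pD: "\<And>y. 0 \<le> y \<bullet> ((B - C) *v y)" using CB loewner_diff by blast
    have "x \<bullet> ((B - C) *v x) = 0" using eq
      by (simp add: matrix_vector_mult_diff_rdistrib inner_diff_right)
    then have "(B - C) *v x = 0" using psd_kernel[OF sD pD] by blast
    then have "B *v x = C *v x" by (simp add: matrix_vector_mult_diff_rdistrib)
    then show ?thesis using e by simp
  qed
next
  assume h: "x \<bullet> (A *v x) < x \<bullet> (B *v x) \<or> A *v x = B *v x"
  obtain C0 where C0: "symmetric_matrix C0" "loewner_le C0 A" "loewner_le C0 B" "C0 *v x = A *v x"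
    using exists_C0[OF assms h] by blast
  define T where "T = {C. symmetric_matrix C \<and> loewner_le C A \<and> loewner_le C B \<and>
                         C *v x = A *v x \<and> loewner_le C0 C}"
  have closedT: "closed T"
  proof -
    have c1: "closed {C::real^'n^'n. transpose C = C}"
      by (rule closed_Collect_eq[OF cont_transpose continuous_on_id])
    have c2: "closed {C. loewner_le C M}" for M :: "real^'n^'n"
      unfolding loewner_le_def
      by (intro closed_Collect_all closed_Collect_le cont_qf continuous_on_const)
    have c3: "closed {C. loewner_le M C}" for M :: "real^'n^'n"
      unfolding loewner_le_def
      by (intro closed_Collect_all closed_Collect_le cont_qf continuous_on_const)
    have c4: "closed {C::real^'n^'n. C *v x = A *v x}"
      by (intro closed_Collect_eq cont_mv continuous_on_const)
    have "T = {C. transpose C = C} \<inter> {C. loewner_le C A} \<inter> {C. loewner_le C B} \<inter>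
              {C. C *v x = A *v x} \<inter> {C. loewner_le C0 C}"
      unfolding T_def symmetric_matrix_def by auto
    then show ?thesis using c1 c2 c3 c4 by (simp add: closed_Int)
  qed
  define M where "M = A - C0"
  define R where "R = (\<lambda>i j. \<bar>C0 $ i $ j\<bar> +
      (axis i 1 \<bullet> (M *v axis i 1) + axis j 1 \<bullet> (M *v axis j 1)) / 2)"
  have entryb: "\<bar>C $ i $ j\<bar> \<le> R i j" if "C \<in> T" for C i j
  proof -
    have sC: "symmetric_matrix C" and CA: "loewner_le C A" and C0C: "loewner_le C0 C"
      using that by (auto simp: T_def)
    define D where "D = C - C0"
    have sD: "symmetric_matrix D" using sym_diff[OF sC C0(1)] by (simp add: D_def)
    have pD: "\<And>y. 0 \<le> y \<bullet> (D *v y)" using C0C loewner_diff D_def by blast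
    have mD: "\<And>y. y \<bullet> (D *v y) \<le> y \<bullet> (M *v y)"
      using CA unfolding loewner_le_def D_def M_def
      by (simp add: matrix_vector_mult_diff_rdistrib inner_diff_right)
    have "\<bar>D $ i $ j\<bar> \<le> (axis i 1 \<bullet> (M *v axis i 1) + axis j 1 \<bullet> (M *v axis j 1)) / 2"
      unfolding entry[of D] by (rule polar_bound[OF sD pD mD])
    moreover have "C $ i $ j = C0 $ i $ j + D $ i $ j" by (simp add: D_def)
    ultimately show ?thesis unfolding R_def by linarith
  qed
  have boundedT: "bounded T"
  proof -
    have "norm C \<le> (\<Sum>i\<in>UNIV. \<Sum>j\<in>UNIV. R i j)" if "C \<in> T" for C
    proof -
      have "norm C \<le> (\<Sum>i\<in>UNIV. norm (C $ i))"
        unfolding norm_vec_def by (rule L2_set_le_sum) simp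
      also have "\<dots> \<le> (\<Sum>i\<in>UNIV. \<Sum>j\<in>UNIV. \<bar>C $ i $ j\<bar>)"
        by (intro sum_mono norm_le_l1_cart)
      also have "\<dots> \<le> (\<Sum>i\<in>UNIV. \<Sum>j\<in>UNIV. R i j)"
        by (intro sum_mono entryb[OF that])
      finally show ?thesis .
    qed
    then show ?thesis unfolding bounded_iff by blast
  qed
  have compactT: "compact T" using closedT boundedT compact_eq_bounded_closed by blast
  have C0T: "C0 \<in> T" using C0 loewner_refl unfolding T_def by blast
  obtain C where CT: "C \<in> T" and Cmax: "\<forall>C'\<in>T. tr C' \<le> tr C"
    using continuous_attains_sup[OF compactT _ cont_tr] C0T by blast
  have sC: "symmetric_matrix C" and CA: "loewner_le C A" and CB: "loewner_le C B"
    and Cx: "C *v x = A *v x" and C0C: "loewner_le C0 C"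
    using CT by (auto simp: T_def)
  have "maximal_lower_bound A B C"
    unfolding maximal_lower_bound_def
  proof (intro conjI sC CA CB allI impI)
    fix C' assume a: "symmetric_matrix C' \<and> loewner_le C C' \<and> loewner_le C' A \<and> loewner_le C' B"
    define D where "D = C' - C"
    have sD: "symmetric_matrix D" using sym_diff a sC unfolding D_def by blast
    have pD: "\<And>y. 0 \<le> y \<bullet> (D *v y)" using a loewner_diff D_def by blast
    have "x \<bullet> (C' *v x) \<le> x \<bullet> (A *v x)" using a unfolding loewner_le_def by blast
    then have "x \<bullet> (D *v x) \<le> 0" using Cx
      by (simp add: D_def matrix_vector_mult_diff_rdistrib inner_diff_right)
    then have "x \<bullet> (D *v x) = 0" using pD[of x] by linarith
    then have "D *v x = 0" using psd_kernel[OF sD pD] by blast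
    then have C'x: "C' *v x = A *v x" using Cx by (simp add: D_def matrix_vector_mult_diff_rdistrib)
    have "C' \<in> T" unfolding T_def using a C'x loewner_trans[OF C0C] by blast
    then have "tr C' \<le> tr C" using Cmax by blast
    then have "tr D \<le> 0"
      by (simp add: tr_def D_def matrix_vector_mult_diff_rdistrib inner_diff_right sum_subtractf)
    then have "D = 0" using psd_zero[OF sD pD] by blast
    then show "C' = C" by (simp add: D_def)
  qed
  then show "\<exists>C. maximal_lower_bound A B C \<and> A *v x = C *v x" using Cx by metis
qed

end
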